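(* If $G$ is a connected locally Dirac graph of order $n \ge 3$, then $\lambda(G) = \delta(G)$.
   Context: $\lambda(G)$ is the edge-connectivity (minimum number of edges whose removal disconnects $G$ or leaves the trivial graph) and $\delta(G)$ the minimum degree. A graph $G$ is locally Dirac if for every vertex $v \in V(G)$ and every $u \in N(v)$, $\deg_{\langle N(v)\rangle}(u) \ge \deg_G(v)/2$, where $N(v)$ is the open neighbourhood of $v$ and $\langle N(v)\rangle$ the subgraph induced by it. *)

theory Defs
  imports Main
begin

definition simple_graph :: "'a set \<Rightarrow> 'a set set \<Rightarrow> bool" where
  "simple_graph V E \<longleftrightarrow> finite V \<and> (\<forall>e\<in>E. e \<subseteq> V \<and> card e = 2)"

definition nbhd :: "'a set set \<Rightarrow> 'a \<Rightarrow> 'a set" where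
  "nbhd E v = {u. {u, v} \<in> E}"

definition degree :: "'a set set \<Rightarrow> 'a \<Rightarrow> nat" where
  "degree E v = card (nbhd E v)"

definition induced_edges :: "'a set set \<Rightarrow> 'a set \<Rightarrow> 'a set set" where
  "induced_edges E S = {e \<in> E. e \<subseteq> S}"

definition min_degree :: "'a set \<Rightarrow> 'a set set \<Rightarrow> nat" where
  "min_degree V E = Min (degree E ` V)"

fun is_walk :: "'a set \<Rightarrow> 'a set set \<Rightarrow> 'a list \<Rightarrow> bool" where
  "is_walk V E [] = False"
| "is_walk V E [x] = (x \<in> V)"
| "is_walk V E (x # y # xs) = (x \<in> V \<and> {x, y} \<in> E \<and> is_walk V E (y # xs))"

definition connected_graph :: "'a set \<Rightarrow> 'a set set \<Rightarrow> bool" where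
  "connected_graph V E \<longleftrightarrow> V \<noteq> {} \<and>
     (\<forall>u\<in>V. \<forall>v\<in>V. \<exists>p. is_walk V E p \<and> hd p = u \<and> last p = v)"

definition edge_connectivity :: "'a set \<Rightarrow> 'a set set \<Rightarrow> nat" where
  "edge_connectivity V E =
     Min {card F | F. F \<subseteq> E \<and> (\<not> connected_graph V (E - F) \<or> card V \<le> 1)}"

definition locally_dirac :: "'a set \<Rightarrow> 'a set set \<Rightarrow> bool" where
  "locally_dirac V E \<longleftrightarrow>
     (\<forall>v\<in>V. \<forall>u\<in>nbhd E v.
        2 * degree (induced_edges E (nbhd E v)) u \<ge> degree E v)"

end

theory Submission
  imports Defs
begin

definition cutset :: "'a set set \<Rightarrow> 'a set \<Rightarrow> 'a set set" where
  "cutset E X = {e\<in>E. \<exists>x\<in>e. \<exists>y\<in>e. x \<in> X \<and> y \<notin> X}"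

lemma edge_facts:
  assumes "simple_graph V E" "{x,y} \<in> E"
  shows "x \<in> V" "y \<in> V" "x \<noteq> y"
proof -
  have "{x,y} \<subseteq> V" "card {x,y} = 2" using assms unfolding simple_graph_def by auto
  then show "x \<in> V" "y \<in> V" "x \<noteq> y" by auto
qed

lemma finE: assumes "simple_graph V E" shows "finite E"
proof -
  have "E \<subseteq> Pow V" using assms unfolding simple_graph_def by auto
  moreover have "finite V" using assms unfolding simple_graph_def by auto
  ultimately show ?thesis by (meson finite_Pow_iff finite_subset)
qed

lemma nbhd_sub: assumes "simple_graph V E" shows "nbhd E v \<subseteq> V"
  using edge_facts[OF assms] unfolding nbhd_def by auto

lemma nbhd_fin: assumes "simple_graph V E" shows "finite (nbhd E v)"
  using nbhd_sub[OF assms] assms unfolding simple_graph_def by (meson finite_subset)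

lemma nbhd_sym: "x \<in> nbhd E y \<longleftrightarrow> y \<in> nbhd E x"
  unfolding nbhd_def by (simp add: insert_commute)

lemma nbhd_irr: assumes "simple_graph V E" shows "x \<notin> nbhd E x"
  using assms unfolding nbhd_def simple_graph_def by force

lemma dirac_local:
  assumes ld: "locally_dirac V E" and w: "w \<in> V" and x: "x \<in> nbhd E w"
  shows "degree E w \<le> 2 * card (nbhd E x \<inter> nbhd E w)"
proof -
  have "nbhd (induced_edges E (nbhd E w)) x = nbhd E x \<inter> nbhd E w"
    using x unfolding nbhd_def induced_edges_def by auto
  then show ?thesis using ld w x unfolding locally_dirac_def degree_def by force
qed

lemma key:
  assumes sg: "simple_graph V E" and ld: "locally_dirac V E" and w: "w \<in> V" "w \<in> X"
    and a2: "card (nbhd E w - X) \<ge> 2"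
  shows "degree E w \<le> card (cutset E X)"
proof -
  define N where "N = nbhd E w"
  define A where "A = N - X"
  define B where "B = N \<inter> X"
  have finN: "finite N" using nbhd_fin[OF sg] N_def by simp
  have finA: "finite A" "finite B" using finN A_def B_def by auto
  have AB: "A \<inter> B = {}" "N = A \<union> B" using A_def B_def by auto
  have D: "degree E w = card A + card B" unfolding degree_def N_def[symmetric]
    using AB finA by (simp add: card_Un_disjoint)
  have a2': "card A \<ge> 2" using a2 A_def N_def by simp
  have finC: "finite (cutset E X)" using finE[OF sg] unfolding cutset_def by simp
  have wN: "w \<notin> N" using nbhd_irr[OF sg] N_def by simp
  have dir: "\<And>x. x \<in> N \<Longrightarrow> degree E w \<le> 2 * card (nbhd E x \<inter> N)"
    using dirac_local[OF ld w(1)] N_def by simp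
  have finx: "\<And>x. finite (nbhd E x)" using nbhd_fin[OF sg] by simp
  show ?thesis
  proof (cases "degree E w \<le> 2 * card A")
    case True
    have "\<forall>y\<in>B. \<exists>z\<in>A. {y,z} \<in> E"
    proof
      fix y assume yB: "y \<in> B"
      show "\<exists>z\<in>A. {y,z} \<in> E"
      proof (rule ccontr)
        assume "\<not> ?thesis"
        then have "nbhd E x \<inter> N \<subseteq> B - {y}" if "x = y" for x
          using that nbhd_irr[OF sg, of y] AB unfolding nbhd_def by (auto simp: insert_commute)
        then have "card (nbhd E y \<inter> N) \<le> card (B - {y})" using finA by (simp add: card_mono)
        moreover have "card (B - {y}) = card B - 1" using yB finA by simp
        moreover have yN: "y \<in> N" using yB B_def by simp
        moreover have "card B \<ge> 1" using yB finA by (metis One_nat_def Suc_leI card_gt_0_iff empty_iff)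
        ultimately show False using dir[OF yN] D True by linarith
      qed
    qed
    then obtain f where f: "\<forall>y\<in>B. f y \<in> A \<and> {y, f y} \<in> E" by metis
    define g where "g z = (if z \<in> A then {w,z} else {z, f z})" for z
    have inj: "inj_on g N"
    proof (rule inj_onI)
      fix z z' assume z: "z \<in> N" "z' \<in> N" "g z = g z'"
      show "z = z'"
      proof (cases "z \<in> A"; cases "z' \<in> A")
        assume "z \<in> A" "z' \<in> A" then show ?thesis using z g_def by (auto simp: doubleton_eq_iff)
      next
        assume h: "z \<in> A" "z' \<notin> A"
        then have "z' \<in> B" "f z' \<in> A" using z AB f by auto
        then show ?thesis using h z g_def wN AB by (auto simp: doubleton_eq_iff)
      next
        assume h: "z \<notin> A" "z' \<in> A"
        then have "z \<in> B" "f z \<in> A" using z AB f by auto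
        then show ?thesis using h z g_def wN AB by (auto simp: doubleton_eq_iff)
      next
        assume h: "z \<notin> A" "z' \<notin> A"
        then have "z \<in> B" "f z \<in> A" "z' \<in> B" "f z' \<in> A" using z AB f by auto
        then show ?thesis using h z g_def AB by (auto simp: doubleton_eq_iff)
      qed
    qed
    have img: "g ` N \<subseteq> cutset E X"
    proof
      fix e assume "e \<in> g ` N"
      then obtain z where z: "z \<in> N" "e = g z" by auto
      show "e \<in> cutset E X"
      proof (cases "z \<in> A")
        case True
        then have "{w,z} \<in> E" using N_def A_def unfolding nbhd_def by (auto simp: insert_commute)
        then show ?thesis using True z g_def w A_def unfolding cutset_def by auto
      next
        case False
        then have "z \<in> B" using z AB by auto
        then show ?thesis using False z g_def f A_def B_def unfolding cutset_def by auto
      qed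
    qed
    have "card N \<le> card (cutset E X)" using card_inj_on_le[OF inj img finC] .
    then show ?thesis using D AB finA by (simp add: card_Un_disjoint)
  next
    case False
    define P where "P = Sigma A (\<lambda>x. nbhd E x \<inter> B)"
    have finP: "finite P" using finA finx P_def by auto
    have cP: "card P = (\<Sum>x\<in>A. card (nbhd E x \<inter> B))"
      using finA finx P_def by (simp add: card_SigmaI)
    have each: "degree E w + 2 \<le> 2 * card (nbhd E x \<inter> B) + 2 * card A" if xA: "x \<in> A" for x
    proof -
      have "nbhd E x \<inter> N \<subseteq> (nbhd E x \<inter> B) \<union> (A - {x})"
        using AB nbhd_irr[OF sg, of x] by auto
      then have "card (nbhd E x \<inter> N) \<le> card ((nbhd E x \<inter> B) \<union> (A - {x}))"
        using finA finx by (intro card_mono) auto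
      also have "\<dots> \<le> card (nbhd E x \<inter> B) + card (A - {x})" by (rule card_Un_le)
      also have "card (A - {x}) = card A - 1" using xA finA by simp
      finally have "card (nbhd E x \<inter> N) \<le> card (nbhd E x \<inter> B) + (card A - 1)" .
      moreover have "x \<in> N" using xA AB by auto
      ultimately show ?thesis using dir[of x] a2' by linarith
    qed
    have "card A * (degree E w + 2) \<le> (\<Sum>x\<in>A. 2 * card (nbhd E x \<inter> B) + 2 * card A)"
      using sum_bounded_below[of A "degree E w + 2" "\<lambda>x. 2 * card (nbhd E x \<inter> B) + 2 * card A"] each by simp
    also have "\<dots> = 2 * card P + 2 * card A * card A"
      by (simp add: cP sum.distrib sum_distrib_left)
    finally have ineq: "card A * (degree E w + 2) \<le> 2 * card P + 2 * card A * card A" .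
    define h where "h p = {fst p, snd p}" for p :: "'a \<times> 'a"
    have injh: "inj_on h P"
      unfolding inj_on_def h_def P_def using AB by (auto simp: doubleton_eq_iff)
    have sub: "(\<lambda>x. {w,x}) ` A \<union> h ` P \<subseteq> cutset E X"
    proof -
      have "(\<lambda>x. {w,x}) ` A \<subseteq> cutset E X"
        using w A_def N_def unfolding cutset_def nbhd_def by (auto simp: insert_commute)
      moreover have "h ` P \<subseteq> cutset E X"
        using A_def B_def P_def unfolding cutset_def nbhd_def h_def by (auto simp: insert_commute)
      ultimately show ?thesis by simp
    qed
    have disj: "(\<lambda>x. {w,x}) ` A \<inter> h ` P = {}"
      using wN AB unfolding P_def h_def by (auto simp: doubleton_eq_iff)
    have c1: "card ((\<lambda>x. {w,x}) ` A) = card A"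
      by (rule card_image) (auto simp: inj_on_def doubleton_eq_iff)
    have c2: "card (h ` P) = card P" using injh by (simp add: card_image)
    have "card A + card P \<le> card (cutset E X)"
      using card_mono[OF finC sub] disj c1 c2 finA finP
      by (simp add: card_Un_disjoint)
    moreover have "degree E w \<le> card A + card P"
    proof -
      have i1: "int (card A) * (int (degree E w) + 2) \<le> 2 * int (card P) + 2 * int (card A) * int (card A)"
        using ineq by (metis (mono_tags) of_nat_add of_nat_le_iff of_nat_mult of_nat_numeral)
      have i2: "0 \<le> (int (degree E w) - 2 * int (card A)) * (int (card A) - 2)"
        using False a2' by simp
      show ?thesis using i1 i2 by (simp add: algebra_simps)
    qed
    ultimately show ?thesis by simp
  qed
qed

lemma walk_cross:
  "is_walk V E p \<Longrightarrow> hd p \<notin> S \<Longrightarrow> last p \<in> S \<Longrightarrow> \<exists>x y. {x,y} \<in> E \<and> x \<notin> S \<and> y \<in> S"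
  by (induction V E p rule: is_walk.induct) (auto split: if_splits)

lemma min_le:
  assumes sg: "simple_graph V E" and w: "w \<in> V"
  shows "min_degree V E \<le> degree E w"
proof -
  have "finite V" using sg unfolding simple_graph_def by simp
  then show ?thesis unfolding min_degree_def using w by simp
qed

lemma lower:
  assumes sg: "simple_graph V E" and cg: "connected_graph V E" and ld: "locally_dirac V E"
    and F: "F \<subseteq> E" and nc: "\<not> connected_graph V (E - F)"
  shows "min_degree V E \<le> card F"
proof -
  have Vne: "V \<noteq> {}" using cg unfolding connected_graph_def by simp
  obtain u0 w0 where uw: "u0 \<in> V" "w0 \<in> V"
    and nw: "\<not> (\<exists>p. is_walk V (E - F) p \<and> hd p = u0 \<and> last p = w0)"
    using nc Vne unfolding connected_graph_def by blast
  define S where "S = {x\<in>V. \<exists>p. is_walk V (E - F) p \<and> hd p = x \<and> last p = w0}"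
  have w0S: "w0 \<in> S" unfolding S_def using uw by (intro CollectI conjI exI[of _ "[w0]"]) auto
  have u0S: "u0 \<notin> S" using nw unfolding S_def by auto
  have clos: "x \<in> S" if "y \<in> S" "{x,y} \<in> E - F" for x y
  proof -
    have "\<exists>p. is_walk V (E - F) p \<and> hd p = y \<and> last p = w0" using \<open>y \<in> S\<close> unfolding S_def by simp
    then obtain p where p: "is_walk V (E - F) p" "hd p = y" "last p = w0" by blast
    then obtain ys where ys: "p = y # ys" by (cases p) auto
    have xy: "x \<in> V" "{x,y} \<in> E - F" using that(2) edge_facts[OF sg, of x y] by auto
    have "is_walk V (E - F) (x # p)" using p(1) xy unfolding ys by simp
    moreover have "hd (x # p) = x" by simp
    moreover have "last (x # p) = w0" using p(3) ys by simp
    ultimately have "\<exists>q. is_walk V (E - F) q \<and> hd q = x \<and> last q = w0" by blast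
    then show ?thesis unfolding S_def using xy(1) by simp
  qed
  obtain p where p: "is_walk V E p" "hd p = u0" "last p = w0" using cg uw unfolding connected_graph_def by blast
  obtain v u where uv0: "{v,u} \<in> E" "v \<notin> S" "u \<in> S" using walk_cross[OF p(1)] p u0S w0S by metis
  have uv: "{u,v} \<in> E" "u \<in> S" "v \<notin> S" using uv0 by (auto simp: insert_commute)
  have uV: "u \<in> V" "v \<in> V" using edge_facts[OF sg uv(1)] by auto
  have cutF: "cutset E X \<subseteq> F" if "X = S \<or> X = V - S" for X
  proof
    fix e assume e: "e \<in> cutset E X"
    then obtain x y where xy: "e \<in> E" "x \<in> e" "y \<in> e" "x \<in> X" "y \<notin> X" unfolding cutset_def by auto
    have "card e = 2" "e \<subseteq> V" using sg xy unfolding simple_graph_def by auto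
    then have exy: "e = {x,y}" using xy by (metis card_2_iff doubleton_eq_iff insertE singletonD)
    show "e \<in> F"
    proof (rule ccontr)
      assume "e \<notin> F"
      then have "{x,y} \<in> E - F" "{y,x} \<in> E - F" using exy xy by (auto simp: insert_commute)
      have yV: "y \<in> V" using xy \<open>e \<subseteq> V\<close> by auto
      show False using that
      proof
        assume "X = S" then show False using clos[of x y] xy \<open>{y,x} \<in> E - F\<close> by auto
      next
        assume "X = V - S" then show False using clos[of y x] xy yV \<open>{x,y} \<in> E - F\<close> by auto
      qed
    qed
  qed
  have finF: "finite F" using finE[OF sg] F by (meson finite_subset)
  have vu: "v \<in> nbhd E u" "u \<in> nbhd E v" using uv unfolding nbhd_def by (auto simp: insert_commute)
  have "\<exists>w X. w \<in> V \<and> w \<in> X \<and> card (nbhd E w - X) \<ge> 2 \<and> (X = S \<or> X = V - S)"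
  proof (cases "card (nbhd E v - (V - S)) \<ge> 2")
    case True
    have "v \<in> V - S" using uV uv by simp
    then show ?thesis using True uV by blast
  next
    case False
    have fv: "finite (nbhd E v - (V - S))" using nbhd_fin[OF sg] by simp
    have "u \<in> nbhd E v - (V - S)" using vu uv uV by simp
    have "card (nbhd E v - (V - S)) \<le> 1" using False by simp
    then have single: "nbhd E v - (V - S) = {u}" using fv \<open>u \<in> nbhd E v - (V - S)\<close>
      using card_le_Suc0_iff_eq by fastforce
    have "degree E v \<ge> 1" unfolding degree_def using vu nbhd_fin[OF sg, of v]
      by (metis One_nat_def Suc_leI card_gt_0_iff empty_iff)
    then have "card (nbhd E u \<inter> nbhd E v) \<ge> 1" using dirac_local[OF ld uV(2) vu(2)] by linarith
    then obtain z where z: "z \<in> nbhd E u" "z \<in> nbhd E v"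
      by (metis card.empty disjoint_iff not_one_le_zero)
    have "z \<noteq> u" using z nbhd_irr[OF sg] by metis
    then have "z \<notin> S" using single z nbhd_sub[OF sg] by blast
    moreover have "z \<noteq> v" using z nbhd_irr[OF sg] by metis
    ultimately have "{v, z} \<subseteq> nbhd E u - S" using z vu uv by auto
    then have "card {v,z} \<le> card (nbhd E u - S)" using nbhd_fin[OF sg] by (intro card_mono) auto
    then have "card (nbhd E u - S) \<ge> 2" using \<open>z \<noteq> v\<close> by simp
    then show ?thesis using uV uv(2) by blast
  qed
  then obtain w X where wX: "w \<in> V" "w \<in> X" "card (nbhd E w - X) \<ge> 2" "X = S \<or> X = V - S" by blast
  have "min_degree V E \<le> degree E w" using min_le[OF sg wX(1)] .
  also have "\<dots> \<le> card (cutset E X)" using key[OF sg ld wX(1-3)] .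
  also have "\<dots> \<le> card F" using card_mono[OF finF cutF[OF wX(4)]] .
  finally show ?thesis .
qed

lemma upper:
  assumes sg: "simple_graph V E" and c3: "card V \<ge> 3"
  shows "\<exists>F. F \<subseteq> E \<and> \<not> connected_graph V (E - F) \<and> card F = min_degree V E"
proof -
  have finV: "finite V" using sg unfolding simple_graph_def by simp
  have Vne: "V \<noteq> {}" using c3 by auto
  have "Min (degree E ` V) \<in> degree E ` V" using finV Vne by (intro Min_in) auto
  then obtain w where w: "w \<in> V" "degree E w = min_degree V E"
    unfolding min_degree_def by auto
  define F where "F = {e\<in>E. w \<in> e}"
  have img: "F = (\<lambda>z. {z,w}) ` nbhd E w"
  proof
    show "F \<subseteq> (\<lambda>z. {z,w}) ` nbhd E w"
    proof
      fix e assume "e \<in> F"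
      then have e: "e \<in> E" "w \<in> e" "card e = 2" using F_def sg unfolding simple_graph_def by auto
      then obtain a b where ab: "e = {a,b}" "a \<noteq> b" by (meson card_2_iff)
      then have "e = {a,w} \<or> e = {b,w}" using e by (auto simp: insert_commute)
      then show "e \<in> (\<lambda>z. {z,w}) ` nbhd E w" using e unfolding nbhd_def by auto
    qed
  next
    show "(\<lambda>z. {z,w}) ` nbhd E w \<subseteq> F" unfolding F_def nbhd_def by auto
  qed
  have "card F = degree E w" unfolding img degree_def
    by (rule card_image) (auto simp: inj_on_def doubleton_eq_iff)
  moreover have "F \<subseteq> E" using F_def by auto
  moreover have "\<not> connected_graph V (E - F)"
  proof
    assume cg: "connected_graph V (E - F)"
    have "card (V - {w}) \<ge> 2" using c3 w finV by simp
    then obtain t where t: "t \<in> V" "t \<noteq> w"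
      by (metis Diff_iff card.empty empty_iff not_numeral_le_zero singletonI subsetI subset_antisym)
    then obtain p where p: "is_walk V (E - F) p" "hd p = w" "last p = t"
      using cg w unfolding connected_graph_def by blast
    show False
    proof (cases p)
      case Nil then show ?thesis using p by simp
    next
      case (Cons a ys)
      then show ?thesis
      proof (cases ys)
        case Nil then show ?thesis using p t Cons by simp
      next
        case (Cons b zs)
        then show ?thesis using p \<open>p = a # ys\<close> F_def by auto
      qed
    qed
  qed
  ultimately show ?thesis using w by metis
qed

theorem mainTheorem10:
  fixes V :: "'a set" and E :: "'a set set"
  assumes "simple_graph V E"
    and "connected_graph V E"
    and "locally_dirac V E"
    and "card V \<ge> 3"
  shows "edge_connectivity V E = min_degree V E"
proof -
  define M where "M = {card F | F. F \<subseteq> E \<and> (\<not> connected_graph V (E - F) \<or> card V \<le> 1)}"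
  have fin: "finite M"
  proof -
    have "M \<subseteq> card ` Pow E" unfolding M_def by auto
    then show ?thesis using finE[OF assms(1)] by (meson finite_Pow_iff finite_imageI finite_subset)
  qed
  obtain F0 where F0: "F0 \<subseteq> E" "\<not> connected_graph V (E - F0)" "card F0 = min_degree V E"
    using upper[OF assms(1,4)] by blast
  have inM: "min_degree V E \<in> M" unfolding M_def
    using F0 by (metis (mono_tags, lifting) mem_Collect_eq)
  have lb: "\<forall>y\<in>M. min_degree V E \<le> y"
    using lower[OF assms(1-3)] assms(4) unfolding M_def by auto
  show ?thesis unfolding edge_connectivity_def M_def[symmetric]
    using Min_eqI[OF fin] inM lb by blast
qed

end
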